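(* Let $(X,d)$ be a bounded metric space and $\ell:X\to[0,+\infty)$ a bounded lower semicontinuous function with $\inf_X\ell=0$. For $\lambda\ge0$ let $u_\lambda$ denote the Perron solution of $(\mathcal{G}_\lambda)$. Then: (a) $u_\lambda\to u_0$ uniformly as $\lambda\to0$; (b) if $X$ is compact and $\alpha>0$, then $u_\lambda\to u_\alpha$ uniformly as $\lambda\to\alpha$.
   Context: Global slope: $G[u](x)=\sup_{y\neq x}\frac{(u(x)-u(y))_+}{d(x,y)}$ if $u(x)<+\infty$, $G[u](x)=+\infty$ otherwise. A solution of $(\mathcal{G}_\lambda)$ is a lower semicontinuous $u$ with $\inf_Xu=0$ and $\lambda u+G[u]=\ell$ on $X$; the Perron solution is the solution that is pointwise maximal among all solutions. *)

theory Defs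
  imports "HOL-Analysis.Analysis"
begin

definition lsc :: "('a::topological_space \<Rightarrow> real) \<Rightarrow> bool" where
  "lsc f \<longleftrightarrow> (\<forall>x t. t < f x \<longrightarrow> (\<forall>\<^sub>F y in nhds x. t < f y))"

text \<open>Global slope G[u](x) = sup over y \<noteq> x of (u x - u y)_+ / d(x,y), valued in [0,+\<infinity>].
  (Solutions are necessarily finite-valued since \<ell> is finite, so u is real-valued here.)\<close>
definition global_slope :: "('a::metric_space \<Rightarrow> real) \<Rightarrow> 'a \<Rightarrow> ereal" where
  "global_slope u x = (SUP y\<in>{y. y \<noteq> x}. ereal (max (u x - u y) 0 / dist x y))"

definition is_solution :: "real \<Rightarrow> ('a::metric_space \<Rightarrow> real) \<Rightarrow> ('a \<Rightarrow> real) \<Rightarrow> bool" where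
  "is_solution lam ell u \<longleftrightarrow> lsc u \<and> (INF x. u x) = 0 \<and> bdd_below (range u) \<and>
     (\<forall>x. ereal (lam * u x) + global_slope u x = ereal (ell x))"

definition is_perron :: "real \<Rightarrow> ('a::metric_space \<Rightarrow> real) \<Rightarrow> ('a \<Rightarrow> real) \<Rightarrow> bool" where
  "is_perron lam ell u \<longleftrightarrow> is_solution lam ell u \<and>
     (\<forall>v. is_solution lam ell v \<longrightarrow> (\<forall>x. v x \<le> u x))"

definition perron :: "real \<Rightarrow> ('a::metric_space \<Rightarrow> real) \<Rightarrow> ('a \<Rightarrow> real)" where
  "perron lam ell = (THE u. is_perron lam ell u)"

end

theory Submission
  imports Defs
begin

definition sub :: "real \<Rightarrow> ('a::metric_space \<Rightarrow> real) \<Rightarrow> ('a \<Rightarrow> real) \<Rightarrow> bool" where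
 "sub lam ell v \<longleftrightarrow> (\<forall>x. 0 \<le> v x) \<and> (\<forall>e>0. \<exists>x. v x < e) \<and> (\<forall>x. lam * v x \<le> ell x) \<and>
    (\<forall>x y. y \<noteq> x \<longrightarrow> lam * v x + (v x - v y) / dist x y \<le> ell x)"

definition UU :: "real \<Rightarrow> ('a::metric_space \<Rightarrow> real) \<Rightarrow> 'a \<Rightarrow> real" where
 "UU lam ell x = (SUP v\<in>{v. sub lam ell v}. v x)"

context
  fixes ell :: "'a::metric_space \<Rightarrow> real" and D L :: real
  assumes Dpos: "D > 0" and Dd: "\<forall>x y::'a. dist x y \<le> D"
    and Lb: "\<forall>x. 0 \<le> ell x \<and> ell x \<le> L"
    and lsc: "lsc ell" and inf0: "\<forall>e>0. \<exists>x. ell x < e"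
    and two: "\<exists>x y::'a. x \<noteq> y"
begin

lemma other: "\<exists>y. y \<noteq> (x::'a)"
  using two by metis

lemma sub_le:
  assumes lam: "lam \<ge> 0" and s: "sub lam ell v" shows "v x \<le> D * ell x"
proof (rule field_le_epsilon)
  fix e :: real assume e: "0 < e"
  then obtain y where y: "v y < e" using s unfolding sub_def by blast
  show "v x \<le> D * ell x + e"
  proof (cases "y = x")
    case True then show ?thesis using y Dpos Lb by (smt (verit) mult_nonneg_nonneg)
  next
    case False
    have h: "lam * v x + (v x - v y) / dist x y \<le> ell x" using s False unfolding sub_def by blast
    have "lam * v x \<ge> 0" using s lam unfolding sub_def by simp
    hence "(v x - v y) / dist x y \<le> ell x" using h by linarith
    moreover have dp: "dist x y > 0" using False by simp
    ultimately have "v x - v y \<le> ell x * dist x y" by (simp add: divide_le_eq)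
    also have "\<dots> \<le> ell x * D" using Dd[rule_format, of x y] Lb[rule_format, of x] by (intro mult_left_mono) auto
    finally show ?thesis using y by (simp add: algebra_simps)
  qed
qed

lemma sub_lip:
  assumes lam: "lam \<ge> 0" and s: "sub lam ell v" shows "v x - v y \<le> L * dist x y"
proof (cases "y = x")
  case True then show ?thesis by simp
next
  case False
  have h: "lam * v x + (v x - v y) / dist x y \<le> ell x" using s False unfolding sub_def by blast
  have "lam * v x \<ge> 0" using s lam unfolding sub_def by simp
  hence "(v x - v y) / dist x y \<le> L" using h Lb by (smt (verit))
  moreover have dp: "dist x y > 0" using False by simp
  ultimately show "v x - v y \<le> L * dist x y" by (simp add: divide_le_eq mult.commute)
qed

lemma sub_zero: "sub lam ell (\<lambda>_. 0)"
  unfolding sub_def using Lb by auto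

lemma bdd: "lam \<ge> 0 \<Longrightarrow> bdd_above ((\<lambda>v. v x) ` {v. sub lam ell v})"
  using sub_le by (auto intro!: bdd_aboveI[where M="D * ell x"])

lemma UU_ge: "lam \<ge> 0 \<Longrightarrow> sub lam ell v \<Longrightarrow> v x \<le> UU lam ell x"
  unfolding UU_def by (rule cSUP_upper[OF _ bdd]) auto

lemma ne: "{v. sub lam ell v} \<noteq> {}"
  using sub_zero by blast

lemma UU_le: "lam \<ge> 0 \<Longrightarrow> UU lam ell x \<le> D * ell x"
  unfolding UU_def by (rule cSUP_least[OF ne]) (auto intro: sub_le)

lemma UU_nonneg: "lam \<ge> 0 \<Longrightarrow> 0 \<le> UU lam ell x"
  using UU_ge[OF _ sub_zero] by simp

lemma UU_sub: assumes lam: "lam \<ge> 0" shows "sub lam ell (UU lam ell)"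
proof -
  have A: "\<forall>e>0. \<exists>x. UU lam ell x < e"
  proof (intro allI impI)
    fix e :: real assume e: "e > 0"
    have "e / D > 0" using e Dpos by simp
    then obtain z where z: "ell z < e / D" using inf0 by blast
    have "UU lam ell z \<le> D * ell z" by (rule UU_le[OF lam])
    also have "\<dots> < e" using z Dpos by (simp add: pos_less_divide_eq mult.commute)
    finally show "\<exists>x. UU lam ell x < e" by blast
  qed
  have B: "lam * UU lam ell x \<le> ell x" for x
  proof (cases "lam = 0")
    case True then show ?thesis using Lb by simp
  next
    case False
    hence lp: "lam > 0" using lam by simp
    have "UU lam ell x \<le> ell x / lam" unfolding UU_def
    proof (rule cSUP_least[OF ne])
      fix v assume "v \<in> {v. sub lam ell v}"
      hence "lam * v x \<le> ell x" unfolding sub_def by blast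
      thus "v x \<le> ell x / lam" using lp by (simp add: le_divide_eq mult.commute)
    qed
    thus ?thesis using lp by (simp add: le_divide_eq mult.commute)
  qed
  have C: "lam * UU lam ell x + (UU lam ell x - UU lam ell y) / dist x y \<le> ell x" if yx: "y \<noteq> x" for x y
  proof -
    define d where "d = dist x y"
    have dp: "d > 0" using yx d_def by simp
    have k: "lam + 1 / d > 0" using dp lam by (simp add: add_nonneg_pos)
    have "UU lam ell x \<le> (ell x + UU lam ell y / d) / (lam + 1/d)" unfolding UU_def[of lam ell x]
    proof (rule cSUP_least[OF ne])
      fix v assume "v \<in> {v. sub lam ell v}"
      hence sv: "sub lam ell v" by simp
      hence "lam * v x + (v x - v y) / d \<le> ell x" unfolding sub_def d_def using yx by blast
      moreover have "v y \<le> UU lam ell y" using UU_ge[OF lam sv] .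
      ultimately have "(lam + 1/d) * v x \<le> ell x + UU lam ell y / d"
        using dp by (simp add: algebra_simps diff_divide_distrib divide_right_mono) (smt (verit) divide_right_mono)
      thus "v x \<le> (ell x + UU lam ell y / d) / (lam + 1/d)" using k by (simp add: le_divide_eq mult.commute)
    qed
    hence "(lam + 1/d) * UU lam ell x \<le> ell x + UU lam ell y / d" using k by (simp add: le_divide_eq mult.commute)
    thus ?thesis unfolding d_def[symmetric] by (simp add: algebra_simps diff_divide_distrib)
  qed
  show ?thesis unfolding sub_def using A B C UU_nonneg[OF lam] by blast
qed

lemma bump:
  assumes lam: "lam \<ge> 0" and sl: "s' < ell x - lam * UU lam ell x"
    and hyp: "\<forall>y. y \<noteq> x \<longrightarrow> max (UU lam ell x - UU lam ell y) 0 / dist x y \<le> s'"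
  shows False
proof -
  let ?U = "UU lam ell"
  define s where "s = ell x - lam * ?U x"
  obtain y0 where y0: "y0 \<noteq> x" using other by blast
  have s'0: "s' \<ge> 0" using hyp y0 by (smt (verit) divide_nonneg_nonneg max.cobounded2 zero_le_dist)
  have ss: "s' < s" using sl s_def by simp
  have Ux0: "lam * ?U x \<ge> 0" using UU_nonneg[OF lam] lam by simp
  have lip: "?U x - ?U y \<le> s' * dist x y" for y
  proof (cases "y = x")
    case True then show ?thesis by simp
  next
    case False
    hence "max (?U x - ?U y) 0 / dist x y \<le> s'" using hyp by blast
    hence "(?U x - ?U y) / dist x y \<le> s'" by (smt (verit) divide_right_mono max.cobounded1 zero_le_dist)
    thus ?thesis using False by (simp add: divide_le_eq)
  qed
  define K where "K = (s + s') / 2"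
  define eta where "eta = (s - s') / 4"
  have etap: "eta > 0" using ss eta_def by simp
  have Ks: "K - s' > 0" using ss K_def by simp
  have K0: "K \<ge> 0" using s'0 ss K_def by simp
  have "eventually (\<lambda>z. ell x - eta < ell z) (nhds x)"
    using lsc etap unfolding lsc_def by simp
  then obtain rho where rho: "rho > 0" "\<forall>z. dist z x < rho \<longrightarrow> ell x - eta < ell z"
    unfolding eventually_nhds_metric by blast
  define delta where "delta = min (rho * (K - s') / 2) (eta / (lam + 1))"
  have dp: "delta > 0" using rho Ks etap lam delta_def by simp
  have d1: "delta \<le> rho * (K - s') / 2" unfolding delta_def by (rule min.cobounded1)
  have d2: "lam * delta \<le> eta"
  proof -
    have "delta \<le> eta / (lam + 1)" unfolding delta_def by (rule min.cobounded2)
    hence "(lam + 1) * delta \<le> eta" using lam by (simp add: le_divide_eq mult.commute)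
    thus ?thesis using dp by (simp add: algebra_simps)
  qed
  define c where "c = (\<lambda>z. ?U x + delta - K * dist x z)"
  define w where "w = (\<lambda>z. max (?U z) (c z))"
  have act: "dist z x < rho" if "?U z < c z" for z
  proof -
    have "?U x - s' * dist x z \<le> ?U z" using lip[of z] by simp
    hence "(K - s') * dist x z < delta" using that c_def by (simp add: algebra_simps)
    hence "dist x z < delta / (K - s')" using Ks by (simp add: less_divide_eq mult.commute)
    also have "\<dots> \<le> rho / 2" using d1 Ks by (simp add: divide_le_eq mult.commute)
    finally show ?thesis using rho by (simp add: dist_commute)
  qed
  have ellx: "ell x \<ge> s" using Ux0 s_def by simp
  have sw: "sub lam ell w" unfolding sub_def
  proof (intro conjI allI impI)
    fix z show "0 \<le> w z" using UU_nonneg[OF lam, of z] w_def by simp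
  next
    fix e :: real assume e: "e > 0"
    have tp: "min (ell x - eta) (e / D) > 0" using e Dpos ellx ss s'0 eta_def by simp
    then obtain z where z: "ell z < min (ell x - eta) (e / D)" using inf0 by blast
    have "\<not> dist z x < rho" using z rho(2) by force
    hence "\<not> ?U z < c z" using act by blast
    hence "w z = ?U z" using w_def by simp
    also have "\<dots> \<le> D * ell z" by (rule UU_le[OF lam])
    also have "\<dots> < e" using z Dpos by (simp add: less_divide_eq mult.commute)
    finally show "\<exists>x. w x < e" by blast
  next
    fix z
    show "lam * w z \<le> ell z"
    proof (cases "?U z < c z")
      case False
      then show ?thesis using UU_sub[OF lam] w_def unfolding sub_def by simp
    next
      case True
      have wz: "w z = c z" using True w_def by simp
      have "c z \<le> ?U x + delta" using c_def K0 by simp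
      hence "lam * w z \<le> lam * ?U x + lam * delta" using wz lam by (simp add: mult_left_mono distrib_left[symmetric])
      also have "\<dots> \<le> ell x - s + eta" using d2 s_def by simp
      also have "\<dots> < ell z"
      proof -
        have "ell x - eta < ell z" using rho(2) act[OF True] by blast
        moreover have "2 * eta < s" using eta_def ss s'0 by simp
        ultimately show ?thesis by simp
      qed
      finally show ?thesis by simp
    qed
  next
    fix z y :: 'a assume yz: "y \<noteq> z"
    have dzy: "dist z y > 0" using yz by simp
    show "lam * w z + (w z - w y) / dist z y \<le> ell z"
    proof (cases "?U z < c z")
      case False
      hence wz: "w z = ?U z" using w_def by simp
      have "w y \<ge> ?U y" using w_def by simp
      hence "(w z - w y) / dist z y \<le> (?U z - ?U y) / dist z y" using wz dzy by (simp add: divide_right_mono)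
      moreover have "lam * ?U z + (?U z - ?U y) / dist z y \<le> ell z" using UU_sub[OF lam] yz unfolding sub_def by blast
      ultimately show ?thesis using wz by simp
    next
      case True
      have wz: "w z = c z" using True w_def by simp
      have "dist x y \<le> dist x z + dist z y" by (rule dist_triangle)
      hence "c y \<ge> c z - K * dist z y" using c_def K0 by (simp add: algebra_simps) (metis add.commute distrib_left mult_left_mono)
      hence "w z - w y \<le> K * dist z y" using wz w_def by simp
      hence q: "(w z - w y) / dist z y \<le> K" using dzy by (simp add: divide_le_eq)
      have "c z \<le> ?U x + delta" using c_def K0 by simp
      hence "lam * w z \<le> lam * ?U x + lam * delta" using wz lam by (simp add: mult_left_mono distrib_left[symmetric])
      hence "lam * w z + (w z - w y) / dist z y \<le> lam * ?U x + eta + K" using q d2 by simp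
      also have "\<dots> = ell x - eta" using s_def K_def eta_def by simp
      also have "\<dots> < ell z" using rho(2) act[OF True] by force
      finally show ?thesis by simp
    qed
  qed
  have "w x \<le> ?U x" by (rule UU_ge[OF lam sw])
  moreover have "w x \<ge> ?U x + delta" using w_def c_def by simp
  ultimately show False using dp by simp
qed

lemma slope_UU:
  assumes lam: "lam \<ge> 0"
  shows "global_slope (UU lam ell) x = ereal (ell x - lam * UU lam ell x)"
proof (rule antisym)
  let ?U = "UU lam ell"
  have S: "sub lam ell ?U" by (rule UU_sub[OF lam])
  show "global_slope ?U x \<le> ereal (ell x - lam * ?U x)"
    unfolding global_slope_def
  proof (rule SUP_least)
    fix y assume "y \<in> {y. y \<noteq> x}"
    hence yx: "y \<noteq> x" by simp
    have a: "lam * ?U x + (?U x - ?U y) / dist x y \<le> ell x" using S yx unfolding sub_def by blast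
    have b: "lam * ?U x \<le> ell x" using S unfolding sub_def by blast
    have "max (?U x - ?U y) 0 / dist x y \<le> ell x - lam * ?U x"
      by (cases "?U x - ?U y \<ge> 0") (use a b in auto)
    thus "ereal (max (?U x - ?U y) 0 / dist x y) \<le> ereal (ell x - lam * ?U x)" by simp
  qed
  show "ereal (ell x - lam * ?U x) \<le> global_slope ?U x"
  proof (rule dense_le)
    fix z assume z: "z < ereal (ell x - lam * ?U x)"
    show "z \<le> global_slope ?U x"
    proof (cases z)
      case (real r)
      hence r: "r < ell x - lam * ?U x" using z by simp
      have "\<exists>y. y \<noteq> x \<and> \<not> max (?U x - ?U y) 0 / dist x y \<le> r"
        using bump[OF lam r] by blast
      then obtain y where y: "y \<noteq> x" "r < max (?U x - ?U y) 0 / dist x y" by force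
      have "ereal r \<le> ereal (max (?U x - ?U y) 0 / dist x y)" using y by simp
      also have "\<dots> \<le> global_slope ?U x" unfolding global_slope_def
        by (rule SUP_upper) (use y in simp)
      finally show ?thesis using real by simp
    next
      case PInf then show ?thesis using z by simp
    next
      case MInf then show ?thesis by simp
    qed
  qed
qed

lemma UU_solution:
  assumes lam: "lam \<ge> 0" shows "is_solution lam ell (UU lam ell)"
proof -
  let ?U = "UU lam ell"
  have S: "sub lam ell ?U" by (rule UU_sub[OF lam])
  have L0: "L \<ge> 0" using Lb by (meson order.trans)
  have lscU: "lsc ?U" unfolding lsc_def
  proof (intro allI impI)
    fix x t assume t: "t < ?U x"
    define r where "r = (?U x - t) / (L + 1)"
    have rp: "r > 0" using t L0 r_def by simp
    show "eventually (\<lambda>y. t < ?U y) (nhds x)" unfolding eventually_nhds_metric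
    proof (intro exI[of _ r] conjI allI impI rp)
      fix y assume y: "dist y x < r"
      have "?U x - ?U y \<le> L * dist x y" by (rule sub_lip[OF lam S])
      also have "\<dots> \<le> L * r" using y L0 by (simp add: dist_commute mult_left_mono)
      also have "\<dots> < ?U x - t"
      proof -
        have "(L + 1) * r = ?U x - t" using r_def L0 by simp
        thus ?thesis using rp by (simp add: algebra_simps)
      qed
      finally show "t < ?U y" by simp
    qed
  qed
  have nn: "\<And>x. 0 \<le> ?U x" using S unfolding sub_def by blast
  have bb: "bdd_below (range ?U)" using nn by (intro bdd_belowI[where m=0]) auto
  have inf: "(INF x. ?U x) = 0"
  proof (rule antisym)
    show "0 \<le> (INF x. ?U x)" using nn by (simp add: cINF_greatest)
    show "(INF x. ?U x) \<le> 0"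
    proof (rule dense_le)
      fix e :: real assume e: "e < (INF x. ?U x)"
      show "e \<le> 0"
      proof (rule ccontr)
        assume "\<not> e \<le> 0"
        hence "e > 0" by simp
        then obtain z where "?U z < e" using S unfolding sub_def by blast
        moreover have "(INF x. ?U x) \<le> ?U z" using bb by (simp add: cINF_lower)
        ultimately show False using e by simp
      qed
    qed
  qed
  show ?thesis unfolding is_solution_def
    using lscU inf bb slope_UU[OF lam] by simp
qed

lemma sol_sub:
  assumes "is_solution lam ell u" shows "sub lam ell u"
proof -
  have bb: "bdd_below (range u)" and inf: "(INF x. u x) = 0" and eq: "\<And>x. ereal (lam * u x) + global_slope u x = ereal (ell x)"
    using assms unfolding is_solution_def by auto
  have nn: "0 \<le> u x" for x using cINF_lower[OF bb, of x] inf by simp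
  have small: "\<exists>x. u x < e" if "e > 0" for e
    using cINF_less_iff[of UNIV u e] bb inf that by auto
  have G: "global_slope u x = ereal (ell x - lam * u x)" for x
  proof (cases "global_slope u x")
    case (real r) then show ?thesis using eq[of x] by simp
  next
    case PInf then show ?thesis using eq[of x] by simp
  next
    case MInf then show ?thesis using eq[of x] by simp
  qed
  have T: "max (u x - u y) 0 / dist x y \<le> ell x - lam * u x" if "y \<noteq> x" for x y
  proof -
    have "ereal (max (u x - u y) 0 / dist x y) \<le> global_slope u x"
      unfolding global_slope_def by (rule SUP_upper) (use that in simp)
    thus ?thesis using G by simp
  qed
  have B: "lam * u x \<le> ell x" for x
  proof -
    obtain y where "y \<noteq> x" using other by blast
    from T[OF this] have "0 \<le> ell x - lam * u x"
      by (smt (verit) divide_nonneg_nonneg max.cobounded2 zero_le_dist)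
    thus ?thesis by simp
  qed
  have C: "lam * u x + (u x - u y) / dist x y \<le> ell x" if "y \<noteq> x" for x y
  proof -
    have "(u x - u y) / dist x y \<le> max (u x - u y) 0 / dist x y"
      by (simp add: divide_right_mono)
    thus ?thesis using T[OF that] by simp
  qed
  show ?thesis unfolding sub_def using nn small B C by blast
qed

lemma perron_UU:
  assumes lam: "lam \<ge> 0" shows "perron lam ell = UU lam ell"
  unfolding perron_def
proof (rule the_equality)
  show P: "is_perron lam ell (UU lam ell)"
    unfolding is_perron_def using UU_solution[OF lam] UU_ge[OF lam] sol_sub by blast
  fix u assume u: "is_perron lam ell u"
  show "u = UU lam ell"
  proof (rule ext, rule antisym)
    fix x
    show "u x \<le> UU lam ell x" using u UU_ge[OF lam] sol_sub unfolding is_perron_def by blast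
    show "UU lam ell x \<le> u x" using u UU_solution[OF lam] unfolding is_perron_def by blast
  qed
qed

lemma compare:
  assumes lam: "lam \<ge> 0" and mu: "mu \<ge> 0"
  shows "UU lam ell x - UU mu ell x \<le> D * D * L * \<bar>mu - lam\<bar>"
proof -
  let ?U = "UU lam ell"
  define t where "t = \<bar>mu - lam\<bar>"
  define k where "k = 1 + t * D"
  have t0: "t \<ge> 0" using t_def by simp
  have kp: "k \<ge> 1" using k_def t0 Dpos by simp
  have S: "sub lam ell ?U" by (rule UU_sub[OF lam])
  have nn: "\<And>z. 0 \<le> ?U z" using S unfolding sub_def by blast
  have ext1: "mu * ?U z \<le> lam * ?U z + t * D * ell z" for z
  proof -
    have "(mu - lam) * ?U z \<le> t * ?U z" using nn[of z] t_def by (intro mult_right_mono) auto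
    also have "\<dots> \<le> t * (D * ell z)" using UU_le[OF lam, of z] t0 by (intro mult_left_mono)
    finally show ?thesis by (simp add: algebra_simps)
  qed
  have S2: "sub mu ell (\<lambda>z. ?U z / k)" unfolding sub_def
  proof (intro conjI allI impI)
    fix z show "0 \<le> ?U z / k" using nn[of z] kp by simp
  next
    fix e :: real assume e: "e > 0"
    then obtain z where "?U z < e * k" using S kp unfolding sub_def by (meson mult_pos_pos less_le_trans zero_less_one)
    hence "?U z / k < e" using kp by (simp add: divide_less_eq)
    thus "\<exists>z. ?U z / k < e" by blast
  next
    fix z
    have "mu * ?U z \<le> ell z + t * D * ell z" using ext1[of z] S unfolding sub_def by (smt (verit))
    also have "\<dots> = k * ell z" using k_def by (simp add: algebra_simps)
    finally show "mu * (?U z / k) \<le> ell z" using kp by (simp add: divide_le_eq mult.commute)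
  next
    fix z y :: 'a assume yz: "y \<noteq> z"
    have "mu * ?U z + (?U z - ?U y) / dist z y \<le> ell z + t * D * ell z"
      using ext1[of z] S yz unfolding sub_def by (smt (verit))
    also have "\<dots> = k * ell z" using k_def by (simp add: algebra_simps)
    finally have "(mu * ?U z + (?U z - ?U y) / dist z y) / k \<le> ell z" using kp by (simp add: divide_le_eq mult.commute)
    thus "mu * (?U z / k) + (?U z / k - ?U y / k) / dist z y \<le> ell z"
      by (simp add: add_divide_distrib diff_divide_distrib mult.commute)
  qed
  have "?U x / k \<le> UU mu ell x" by (rule UU_ge[OF mu S2])
  hence "?U x - UU mu ell x \<le> ?U x - ?U x / k" by simp
  also have "\<dots> = ?U x * (t * D) / k" using kp k_def by (simp add: field_simps)
  also have "\<dots> \<le> ?U x * (t * D)" proof -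
    have a0: "0 \<le> ?U x * (t * D)" using nn[of x] t0 Dpos by simp
    have "?U x * (t * D) * 1 \<le> ?U x * (t * D) * k" using kp a0 by (rule mult_left_mono)
    thus ?thesis using kp by (simp add: divide_le_eq)
  qed
  also have "\<dots> \<le> (D * L) * (t * D)"
  proof (rule mult_right_mono)
    show "?U x \<le> D * L" using UU_le[OF lam, of x] Lb Dpos by (smt (verit) mult_left_mono)
    show "0 \<le> t * D" using t0 Dpos by simp
  qed
  finally show ?thesis using t_def by (simp add: algebra_simps)
qed

end

lemma main_est:
  fixes ell :: "'a::metric_space \<Rightarrow> real"
  assumes "bounded (UNIV :: 'a set)"
    and "\<forall>x. ell x \<ge> 0"
    and "bounded (range ell)"
    and "lsc ell"
    and "(INF x. ell x) = 0"
  shows "\<exists>C\<ge>0. \<forall>lam mu x. lam \<ge> 0 \<longrightarrow> mu \<ge> 0 \<longrightarrow>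
           \<bar>perron lam ell x - perron mu ell x\<bar> \<le> C * \<bar>lam - mu\<bar>"
proof (cases "\<exists>x y::'a. x \<noteq> y")
  case False
  have "is_perron lam ell = is_perron mu ell" for lam mu
  proof -
    have "\<not> is_solution lam ell u" for lam u
    proof
      assume "is_solution lam ell u"
      then have eq: "ereal (lam * u x) + global_slope u x = ereal (ell x)" for x
        unfolding is_solution_def by blast
      fix x :: 'a
      have "{y. y \<noteq> x} = {}" using False by blast
      hence "global_slope u x = -\<infinity>" unfolding global_slope_def by (simp add: bot_ereal_def)
      thus False using eq[of x] by simp
    qed
    thus ?thesis unfolding is_perron_def by auto
  qed
  hence "perron lam ell = perron mu ell" for lam mu unfolding perron_def by metis
  thus ?thesis by (intro exI[of _ 0]) (metis abs_zero diff_self mult_zero_left order_refl)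
next
  case two: True
  obtain x0 :: 'a and e where e: "\<forall>y\<in>UNIV. dist x0 y \<le> e" using assms(1) unfolding bounded_def by blast
  define D where "D = 2 * e + 1"
  have e0: "e \<ge> 0" using e by (metis UNIV_I dist_self)
  have Dpos: "D > 0" using e0 D_def by simp
  have Dd: "\<forall>x y::'a. dist x y \<le> D"
  proof (intro allI)
    fix x y :: 'a
    have "dist x y \<le> dist x0 x + dist x0 y" by (rule dist_triangle3)
    thus "dist x y \<le> D" using e D_def by (smt (verit) UNIV_I)
  qed
  obtain L where L: "\<forall>z\<in>range ell. \<bar>z\<bar> \<le> L" using assms(3) unfolding bounded_real by blast
  have Lb: "\<forall>x. 0 \<le> ell x \<and> ell x \<le> L" using L assms(2) by auto
  have bb: "bdd_below (range ell)" using assms(2) by (intro bdd_belowI[where m=0]) auto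
  have inf0: "\<forall>e>0. \<exists>x. ell x < e"
    using cINF_less_iff[of UNIV ell] bb assms(5) by auto
  have L0: "L \<ge> 0" using Lb by (meson order.trans)
  show ?thesis
  proof (intro exI[of _ "D * D * L"] conjI allI impI)
    show "0 \<le> D * D * L" using Dpos L0 by simp
    fix lam mu :: real and x :: 'a assume lam: "lam \<ge> 0" and mu: "mu \<ge> 0"
    note P1 = perron_UU[OF Dpos Dd Lb assms(4) inf0 two lam]
    note P2 = perron_UU[OF Dpos Dd Lb assms(4) inf0 two mu]
    have c1: "UU lam ell x - UU mu ell x \<le> D * D * L * \<bar>mu - lam\<bar>"
      by (rule compare[OF Dpos Dd Lb assms(4) inf0 two lam mu])
    have c2: "UU mu ell x - UU lam ell x \<le> D * D * L * \<bar>lam - mu\<bar>"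
      by (rule compare[OF Dpos Dd Lb assms(4) inf0 two mu lam])
    show "\<bar>perron lam ell x - perron mu ell x\<bar> \<le> D * D * L * \<bar>lam - mu\<bar>"
      using c1 c2 P1 P2 by (simp add: abs_minus_commute)
  qed
qed

theorem corollary5p6:
  fixes ell :: "'a::metric_space \<Rightarrow> real"
  assumes "bounded (UNIV :: 'a set)"
    and "\<forall>x. ell x \<ge> 0"
    and "bounded (range ell)"
    and "lsc ell"
    and "(INF x. ell x) = 0"
  shows "uniform_limit UNIV (\<lambda>lam. perron lam ell) (perron 0 ell) (at 0 within {0..}) \<and>
    (\<forall>\<alpha>. compact (UNIV :: 'a set) \<and> \<alpha> > 0 \<longrightarrow>
           uniform_limit UNIV (\<lambda>lam. perron lam ell) (perron \<alpha> ell) (at \<alpha>))"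
proof -
  obtain C where C0: "C \<ge> 0" and C: "\<And>lam mu x. lam \<ge> 0 \<Longrightarrow> mu \<ge> 0 \<Longrightarrow>
           \<bar>perron lam ell x - perron mu ell x\<bar> \<le> C * \<bar>lam - mu\<bar>"
    using main_est[OF assms] by blast
  have gen: "\<forall>\<^sub>F lam in at a within S. \<forall>x\<in>UNIV. dist (perron lam ell x) (perron a ell x) < e"
    if a0: "a \<ge> 0" and e: "e > 0" and ev: "\<forall>\<^sub>F lam in at a within S. lam \<ge> 0" for a e S
  proof -
    have "\<forall>\<^sub>F lam in at a within S. dist lam a < e / (C + 1)"
      using e C0 by (intro eventually_at_to_0 tendstoD[OF tendsto_ident_at]) auto
    thus ?thesis using ev
    proof eventually_elim
      case (elim lam)
      show ?case
      proof
        fix x :: 'a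
        have "\<bar>perron lam ell x - perron a ell x\<bar> \<le> C * \<bar>lam - a\<bar>" using C elim(2) a0 by blast
        also have "\<dots> < e"
        proof -
          have "\<bar>lam - a\<bar> * (C + 1) < e" using elim(1) C0 by (simp add: dist_real_def less_divide_eq)
          moreover have "C * \<bar>lam - a\<bar> \<le> \<bar>lam - a\<bar> * (C + 1)" by (simp add: algebra_simps)
          ultimately show ?thesis by linarith
        qed
        finally show "dist (perron lam ell x) (perron a ell x) < e" by (simp add: dist_real_def)
      qed
    qed
  qed
  show ?thesis
  proof (intro conjI allI impI)
    show "uniform_limit UNIV (\<lambda>lam. perron lam ell) (perron 0 ell) (at 0 within {0..})"
      unfolding uniform_limit_iff
      by (intro allI impI gen) (auto simp: eventually_at_filter)
  next
    fix \<alpha> :: real assume a: "compact (UNIV :: 'a set) \<and> \<alpha> > 0"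
    have ev: "\<forall>\<^sub>F lam in at \<alpha>. lam \<ge> 0"
    proof -
      have "\<forall>\<^sub>F lam in at \<alpha>. lam > 0" using a by (intro order_tendstoD(1)[OF tendsto_ident_at]) auto
      thus ?thesis by eventually_elim simp
    qed
    show "uniform_limit UNIV (\<lambda>lam. perron lam ell) (perron \<alpha> ell) (at \<alpha>)"
      unfolding uniform_limit_iff using a ev by (intro allI impI gen) auto
  qed
qed

end
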